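(* For all integers $n \geq 3$ and $k \geq 4$, $h(n,k) \geq n$.
   Context: All graphs are finite and simple. A degree monotone path in a graph $G$ is a path $v_1v_2\ldots v_m$ such that $\deg(v_1)\le \cdots\le \deg(v_m)$ or $\deg(v_1)\ge \cdots\ge \deg(v_m)$; its length is its number of vertices. $mp(G)$ denotes the maximum length of a degree monotone path in $G$. For a pair $e$ of non-adjacent vertices, $G+e$ is $G$ with the edge $e$ added. A graph $G$ is $k$-saturated if $mp(G)\le k-1$ and $mp(G+e)\ge k$ for every pair $e$ of non-adjacent vertices of $G$ (so $K_m$ is $k$-saturated for $m\le k-1$). $h(n,k)$ is the minimum number of edges of a $k$-saturated graph on $n$ vertices. *)

theory Defs
  imports Main
begin

definition simple_graph :: "'a set \<Rightarrow> 'a set set \<Rightarrow> bool" where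
  "simple_graph V E \<longleftrightarrow> finite V \<and> (\<forall>e\<in>E. e \<subseteq> V \<and> card e = 2)"

definition degree :: "'a set set \<Rightarrow> 'a \<Rightarrow> nat" where
  "degree E v = card {e \<in> E. v \<in> e}"

definition is_path :: "'a set \<Rightarrow> 'a set set \<Rightarrow> 'a list \<Rightarrow> bool" where
  "is_path V E p \<longleftrightarrow> p \<noteq> [] \<and> distinct p \<and> set p \<subseteq> V \<and>
     (\<forall>i. Suc i < length p \<longrightarrow> {p ! i, p ! Suc i} \<in> E)"

definition degree_monotone_path :: "'a set \<Rightarrow> 'a set set \<Rightarrow> 'a list \<Rightarrow> bool" where
  "degree_monotone_path V E p \<longleftrightarrow> is_path V E p \<and>
     (sorted (map (degree E) p) \<or> sorted (rev (map (degree E) p)))"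

definition mp :: "'a set \<Rightarrow> 'a set set \<Rightarrow> nat" where
  "mp V E = Max (length ` {p. degree_monotone_path V E p})"

definition saturated :: "nat \<Rightarrow> 'a set \<Rightarrow> 'a set set \<Rightarrow> bool" where
  "saturated k V E \<longleftrightarrow> simple_graph V E \<and> mp V E \<le> k - 1 \<and>
     (\<forall>u\<in>V. \<forall>v\<in>V. u \<noteq> v \<longrightarrow> {u, v} \<notin> E \<longrightarrow> mp V (insert {u, v} E) \<ge> k)"

text \<open>h(n,k): minimum number of edges of a k-saturated graph on n vertices
(vertices taken as {0..<n}, which loses no generality).\<close>
definition h :: "nat \<Rightarrow> nat \<Rightarrow> nat" where
  "h n k = (LEAST m. \<exists>E :: nat set set. saturated k {0..<n} E \<and> card E = m)"

end

theory Submission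
  imports Defs
begin


definition up :: "('a \<Rightarrow> nat) \<Rightarrow> 'a list \<Rightarrow> bool" where
  "up f p = (\<forall>i. Suc i < length p \<longrightarrow> f (p!i) \<le> f (p!Suc i))"
definition down :: "('a \<Rightarrow> nat) \<Rightarrow> 'a list \<Rightarrow> bool" where
  "down f p = (\<forall>i. Suc i < length p \<longrightarrow> f (p!Suc i) \<le> f (p!i))"

lemma sorted_up: "sorted (map f p) \<longleftrightarrow> up f p"
  by (simp add: sorted_iff_nth_Suc up_def)

lemma sorted_down: "sorted (rev (map f p)) \<longleftrightarrow> down f p"
proof -
  have "sorted (rev (map f p)) = sorted_wrt (\<lambda>x y. y \<le> x) (map f p)"
    by (simp add: sorted_wrt_rev)
  also have "\<dots> = down f p"
    by (subst sorted_wrt_iff_nth_Suc_transp) (auto simp: transp_def down_def)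
  finally show ?thesis .
qed

lemma dm_iff: "degree_monotone_path V E p \<longleftrightarrow> is_path V E p \<and> (up (degree E) p \<or> down (degree E) p)"
  by (simp add: degree_monotone_path_def sorted_up sorted_down)

lemma up_mono: "up f p \<Longrightarrow> i \<le> j \<Longrightarrow> j < length p \<Longrightarrow> f (p!i) \<le> f (p!j)"
  by (induction j) (auto simp: up_def le_Suc_eq intro: order_trans)

lemma down_mono: "down f p \<Longrightarrow> i \<le> j \<Longrightarrow> j < length p \<Longrightarrow> f (p!j) \<le> f (p!i)"
  by (induction j) (auto simp: down_def le_Suc_eq intro: order_trans)

lemma up_rev: "up f (rev p) \<longleftrightarrow> down f p"
  unfolding up_def down_def
proof safe
  fix i assume H: "\<forall>i. Suc i < length (rev p) \<longrightarrow> f (rev p ! i) \<le> f (rev p ! Suc i)" "Suc i < length p"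
  from H(1)[rule_format, of "length p - Suc (Suc i)"] H(2) show "f (p ! Suc i) \<le> f (p ! i)"
    by (simp add: rev_nth Suc_diff_Suc)
next
  fix i assume H: "\<forall>i. Suc i < length p \<longrightarrow> f (p ! Suc i) \<le> f (p ! i)" "Suc i < length (rev p)"
  from H(1)[rule_format, of "length p - Suc (Suc i)"] H(2) show "f (rev p ! i) \<le> f (rev p ! Suc i)"
    by (simp add: rev_nth Suc_diff_Suc)
qed

lemma down_rev: "down f (rev p) \<longleftrightarrow> up f p"
  using up_rev[of f "rev p"] by simp

lemma is_path_rev: "is_path V E p \<Longrightarrow> is_path V E (rev p)"
  unfolding is_path_def
proof (intro conjI allI impI; (elim conjE)?)
  fix i assume H: "\<forall>i. Suc i < length p \<longrightarrow> {p ! i, p ! Suc i} \<in> E" "Suc i < length (rev p)"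
  from H(1)[rule_format, of "length p - Suc (Suc i)"] H(2) show "{rev p ! i, rev p ! Suc i} \<in> E"
    by (simp add: rev_nth Suc_diff_Suc insert_commute)
qed auto

lemma dm_rev: "degree_monotone_path V E p \<Longrightarrow> degree_monotone_path V E (rev p)"
  by (auto simp: dm_iff is_path_rev up_rev down_rev)



definition N :: "'a set set \<Rightarrow> 'a \<Rightarrow> 'a set" where "N E x = {y. {x,y} \<in> E}"

lemma sg_finE: "simple_graph V E \<Longrightarrow> finite E"
proof -
  assume "simple_graph V E"
  then have "E \<subseteq> Pow V" "finite V" by (auto simp: simple_graph_def)
  then show ?thesis by (meson finite_Pow_iff finite_subset)
qed

lemma sg_edge: assumes "simple_graph V E" "{x,y} \<in> E" shows "x \<noteq> y \<and> x \<in> V \<and> y \<in> V"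
proof -
  have "\<forall>e\<in>E. e \<subseteq> V \<and> card e = 2" using assms(1) by (simp add: simple_graph_def)
  then have h: "{x,y} \<subseteq> V" "card {x,y} = 2" using assms(2) by auto
  then have "x \<noteq> y" by (cases "x = y") auto
  then show ?thesis using h by simp
qed

lemma sg_insert: "simple_graph V E \<Longrightarrow> a \<in> V \<Longrightarrow> b \<in> V \<Longrightarrow> a \<noteq> b \<Longrightarrow> simple_graph V (insert {a,b} E)"
  unfolding simple_graph_def by auto

lemma nbrs_card: "finite H \<Longrightarrow> (\<forall>s\<in>S. {x,s} \<in> H) \<Longrightarrow> x \<notin> S \<Longrightarrow> card S \<le> degree H x"
proof -
  assume f: "finite H" and h: "\<forall>s\<in>S. {x,s} \<in> H" and x: "x \<notin> S"
  have inj: "inj_on (\<lambda>s. {x,s}) S" using x by (auto simp: inj_on_def doubleton_eq_iff)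
  have sub: "(\<lambda>s. {x,s}) ` S \<subseteq> {e\<in>H. x \<in> e}" using h by auto
  have "card S = card ((\<lambda>s. {x,s}) ` S)" using card_image[OF inj] by simp
  also have "\<dots> \<le> card {e\<in>H. x \<in> e}" using sub f by (intro card_mono) auto
  finally show ?thesis by (simp add: degree_def)
qed

lemma deg_card_nbrs: assumes "simple_graph V E" shows "degree E x = card (N E x)" "finite (N E x)"
proof -
  have sub: "N E x \<subseteq> V" using sg_edge[OF assms] by (auto simp: N_def)
  have "finite V" using assms by (simp add: simple_graph_def)
  then show fin: "finite (N E x)" using finite_subset[OF sub] by simp
  have "x \<notin> N E x" using sg_edge[OF assms, of x x] unfolding N_def by auto
  then have inj: "inj_on (\<lambda>s. {x,s}) (N E x)" by (auto simp: inj_on_def doubleton_eq_iff)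
  have eq: "{e\<in>E. x \<in> e} = (\<lambda>s. {x,s}) ` N E x"
  proof (rule set_eqI, rule iffI)
    fix e assume "e \<in> {e\<in>E. x \<in> e}"
    then have e: "e \<in> E" "x \<in> e" by auto
    have "\<forall>e\<in>E. e \<subseteq> V \<and> card e = 2" using assms by (simp add: simple_graph_def)
    then have "card e = 2" using e by simp
    then obtain a b where ab: "e = {a,b}" "a \<noteq> b" using card_2_iff[THEN iffD1] by blast
    show "e \<in> (\<lambda>s. {x,s}) ` N E x"
    proof (cases "a = x")
      case True
      then have "b \<in> N E x" using ab e by (simp add: N_def)
      then show ?thesis using ab True by (intro image_eqI[of _ _ b]) auto
    next
      case False then have "b = x" using ab e by auto
      then have "a \<in> N E x" using ab e by (simp add: N_def insert_commute)
      then show ?thesis using ab \<open>b = x\<close> by (intro image_eqI[of _ _ a]) (auto simp: insert_commute)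
    qed
  next
    fix e assume "e \<in> (\<lambda>s. {x,s}) ` N E x"
    then show "e \<in> {e\<in>E. x \<in> e}" by (auto simp: N_def)
  qed
  have "degree E x = card ((\<lambda>s. {x,s}) ` N E x)" unfolding degree_def eq by (rule refl)
  also have "\<dots> = card (N E x)" by (rule card_image[OF inj])
  finally show "degree E x = card (N E x)" .
qed

lemma deg_insert: assumes "finite E" "{a,b} \<notin> E"
  shows "degree (insert {a,b} E) x = degree E x + (if x = a \<or> x = b then 1 else 0)"
proof -
  have fin: "finite {e\<in>E. x \<in> e}" using assms by auto
  show ?thesis
  proof (cases "x = a \<or> x = b")
    case True
    then have "{e\<in>insert {a,b} E. x \<in> e} = insert {a,b} {e\<in>E. x \<in> e}" by auto
    then show ?thesis using True fin assms(2) by (simp add: degree_def)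
  next
    case False
    then have "{e\<in>insert {a,b} E. x \<in> e} = {e\<in>E. x \<in> e}" by auto
    then show ?thesis using False by (simp add: degree_def)
  qed
qed

lemma deg_pos: "simple_graph V E \<Longrightarrow> {x,a} \<in> E \<Longrightarrow> 1 \<le> degree E x"
  using nbrs_card[of E "{a}" x] sg_finE sg_edge by fastforce

lemma only_nbr1: assumes "simple_graph V E" "degree E x = 1" "{x,a} \<in> E" "{x,c} \<in> E" shows "c = a"
proof (rule ccontr)
  assume "c \<noteq> a"
  then have "card {a,c} \<le> degree E x" using assms sg_edge[OF assms(1)] 
    by (intro nbrs_card sg_finE[OF assms(1)]) auto
  then show False using \<open>c \<noteq> a\<close> assms(2) by simp
qed

lemma only_nbr2: assumes "simple_graph V E" "degree E x = 2" "{x,a} \<in> E" "{x,b} \<in> E" "a \<noteq> b" "{x,c} \<in> E"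
  shows "c = a \<or> c = b"
proof (rule ccontr)
  assume "\<not> (c = a \<or> c = b)"
  then have "card {a,b,c} \<le> degree E x" using assms sg_edge[OF assms(1)] 
    by (intro nbrs_card sg_finE[OF assms(1)]) auto
  then show False using \<open>\<not> (c = a \<or> c = b)\<close> assms(2,5) by (auto simp: card_insert_if)
qed

lemma other_nbr: assumes "simple_graph V E" "degree E x = 2" "{x,a} \<in> E"
  shows "\<exists>b. {x,b} \<in> E \<and> b \<noteq> a"
proof -
  have "card (N E x) = 2" "finite (N E x)" using deg_card_nbrs[OF assms(1)] assms(2) by auto
  moreover have "N E x \<subseteq> {a} \<Longrightarrow> card (N E x) \<le> 1" using card_mono[of "{a}" "N E x"] by simp
  ultimately have "\<not> N E x \<subseteq> {a}" by linarith
  then show ?thesis by (auto simp: N_def)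
qed

lemma path_edge: "is_path V H p \<Longrightarrow> Suc i < length p \<Longrightarrow> {p!i, p!Suc i} \<in> H"
  by (simp add: is_path_def)

lemma interior_deg: assumes "finite H" "is_path V H p" "0 < i" "Suc i < length p"
  shows "2 \<le> degree H (p!i)"
proof -
  have d: "distinct p" using assms(2) is_path_def by blast
  have e1: "{p!i, p!(i-1)} \<in> H" using path_edge[OF assms(2), of "i-1"] assms by (simp add: insert_commute)
  have e2: "{p!i, p!Suc i} \<in> H" using path_edge[OF assms(2), of i] assms by simp
  have ne: "p!(i-1) \<noteq> p!Suc i" "p!i \<noteq> p!(i-1)" "p!i \<noteq> p!Suc i"
    using d assms by (simp_all add: nth_eq_iff_index_eq)
  have "card {p!(i-1), p!Suc i} \<le> degree H (p!i)"
    using e1 e2 ne by (intro nbrs_card assms(1)) auto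
  then show ?thesis using ne by simp
qed

lemma no_strict_max: "up f p \<or> down f p \<Longrightarrow> 0 < i \<Longrightarrow> Suc i < length p \<Longrightarrow>
   f (p!(i-1)) < f (p!i) \<Longrightarrow> f (p!Suc i) < f (p!i) \<Longrightarrow> False"
  unfolding up_def down_def
proof (elim disjE)
  assume "\<forall>i. Suc i < length p \<longrightarrow> f (p ! i) \<le> f (p ! Suc i)" "Suc i < length p" "f (p ! Suc i) < f (p ! i)"
  then show False by auto
next
  assume H: "\<forall>i. Suc i < length p \<longrightarrow> f (p ! Suc i) \<le> f (p ! i)" "0 < i" "Suc i < length p" "f (p ! (i-1)) < f (p ! i)"
  have "f (p ! Suc (i-1)) \<le> f (p ! (i-1))" using H(1)[rule_format, of "i-1"] H(2,3) by simp
  then show False using H(2,4) by simp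
qed

lemma no_strict_min: "up f p \<or> down f p \<Longrightarrow> 0 < i \<Longrightarrow> Suc i < length p \<Longrightarrow>
   f (p!i) < f (p!(i-1)) \<Longrightarrow> f (p!i) < f (p!Suc i) \<Longrightarrow> False"
  unfolding up_def down_def
proof (elim disjE)
  assume "\<forall>i. Suc i < length p \<longrightarrow> f (p ! Suc i) \<le> f (p ! i)" "Suc i < length p" "f (p ! i) < f (p ! Suc i)"
  then show False by auto
next
  assume H: "\<forall>i. Suc i < length p \<longrightarrow> f (p ! i) \<le> f (p ! Suc i)" "0 < i" "Suc i < length p" "f (p ! i) < f (p ! (i-1))"
  have "f (p ! (i-1)) \<le> f (p ! Suc (i-1))" using H(1)[rule_format, of "i-1"] H(2,3) by simp
  then show False using H(2,4) by simp
qed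

lemma closure: assumes "is_path V H p" "\<forall>x y. x \<in> C \<longrightarrow> {x,y} \<in> H \<longrightarrow> y \<in> C" "x \<in> set p" "x \<in> C"
  shows "set p \<subseteq> C"
proof -
  have "\<forall>i<length p. (p!i \<in> C \<longleftrightarrow> p!0 \<in> C)"
  proof (intro allI impI)
    fix i show "i < length p \<Longrightarrow> (p!i \<in> C \<longleftrightarrow> p!0 \<in> C)"
    proof (induction i)
      case (Suc i)
      have "{p!i, p!Suc i} \<in> H" using path_edge[OF assms(1) Suc.prems] .
      then have "p!i \<in> C \<longleftrightarrow> p!Suc i \<in> C" using assms(2) by (metis insert_commute)
      then show ?case using Suc by simp
    qed simp
  qed
  then show ?thesis using assms(3,4) by (metis in_set_conv_nth subsetI)
qed

lemma local_max: assumes "is_path V H p" "up f p \<or> down f p" "3 \<le> length p" "x \<in> set p"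
  "\<forall>z. {x,z} \<in> H \<longrightarrow> z = y" "f x < f y" "\<forall>z. {y,z} \<in> H \<longrightarrow> z \<noteq> x \<longrightarrow> f z < f y"
  shows False
proof -
  have d: "distinct p" using assms(1) is_path_def by blast
  obtain i where i: "i < length p" "p!i = x" using assms(4) by (meson in_set_conv_nth)
  consider "i = 0" | "0 < i \<and> Suc i < length p" | "Suc i = length p" using i by linarith
  then show False
  proof cases
    case 1
    have "{x, p!1} \<in> H" using path_edge[OF assms(1), of 0] assms(3) i 1 by simp
    then have y: "p!1 = y" using assms(5) by blast
    have "{y, p!2} \<in> H" using path_edge[OF assms(1), of 1] assms(3) y by (simp add: numeral_2_eq_2)
    moreover have "p!2 \<noteq> x" using nth_eq_iff_index_eq[OF d, of 2 0] i 1 assms(3) by simp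
    ultimately have "f (p!2) < f y" using assms(7) by blast
    then show False using no_strict_max[OF assms(2), of 1] assms(3,6) i 1 y by (simp add: numeral_2_eq_2)
  next
    case 2
    have "{x, p!(i-1)} \<in> H" using path_edge[OF assms(1), of "i-1"] 2 i by (simp add: insert_commute)
    moreover have "{x, p!Suc i} \<in> H" using path_edge[OF assms(1), of "i"] 2 i by simp
    ultimately have "p!(i-1) = p!Suc i" using assms(5) by metis
    then show False using nth_eq_iff_index_eq[OF d, of "i-1" "Suc i"] 2 by (simp; linarith)
  next
    case 3
    have "{x, p!(i-1)} \<in> H" using path_edge[OF assms(1), of "i-1"] 3 i assms(3) by (simp add: insert_commute)
    then have y: "p!(i-1) = y" using assms(5) by blast
    have "{y, p!(i-2)} \<in> H" using path_edge[OF assms(1), of "i-2"] 3 assms(3) y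
      by (simp add: insert_commute Suc_diff_Suc numeral_2_eq_2)
    moreover have "p!(i-2) \<noteq> x" using nth_eq_iff_index_eq[OF d, of "i-2" i] i 3 assms(3) by simp
    ultimately have "f (p!(i-2)) < f y" using assms(7) by blast
    then show False using no_strict_max[OF assms(2), of "i-1"] assms(3,6) i 3 y
      by (simp add: numeral_2_eq_2 Suc_diff_Suc)
  qed
qed



lemma dm_fin: "simple_graph V E \<Longrightarrow> finite {p. degree_monotone_path V E p}"
proof -
  assume "simple_graph V E"
  then have "finite V" by (simp add: simple_graph_def)
  then have "finite {xs. set xs \<subseteq> V \<and> distinct xs}" by (rule finite_subset_distinct)
  moreover have "{p. degree_monotone_path V E p} \<subseteq> {xs. set xs \<subseteq> V \<and> distinct xs}"
    by (auto simp: degree_monotone_path_def is_path_def)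
  ultimately show ?thesis using finite_subset by blast
qed

lemma mp_ge: "simple_graph V E \<Longrightarrow> degree_monotone_path V E p \<Longrightarrow> length p \<le> mp V E"
  unfolding mp_def using dm_fin by (intro Max_ge) auto

lemma single_dm: "x \<in> V \<Longrightarrow> degree_monotone_path V E [x]"
  by (simp add: degree_monotone_path_def is_path_def)

lemma mp_ex: assumes "simple_graph V E" "x \<in> V" shows "\<exists>p. degree_monotone_path V E p \<and> length p = mp V E"
proof -
  have "length ` {p. degree_monotone_path V E p} \<noteq> {}" using single_dm[OF assms(2)] by blast
  then have "mp V E \<in> length ` {p. degree_monotone_path V E p}"
    unfolding mp_def using dm_fin[OF assms(1)] by (intro Max_in) auto
  then show ?thesis by auto
qed

lemma sat_path: assumes "saturated k V E" "u \<in> V" "v \<in> V" "u \<noteq> v" "{u,v} \<notin> E"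
  shows "\<exists>p. degree_monotone_path V (insert {u,v} E) p \<and> k \<le> length p"
proof -
  have sg: "simple_graph V E" using assms(1) by (simp add: saturated_def)
  have "k \<le> mp V (insert {u,v} E)" using assms by (simp add: saturated_def)
  moreover obtain p where "degree_monotone_path V (insert {u,v} E) p" "length p = mp V (insert {u,v} E)"
    using mp_ex[OF sg_insert[OF sg assms(2,3,4)] assms(2)] by blast
  ultimately show ?thesis by auto
qed

lemma mpG: "saturated k V E \<Longrightarrow> degree_monotone_path V E p \<Longrightarrow> length p \<le> k - 1"
  unfolding saturated_def using mp_ge by fastforce

lemma path_E: "is_path V (insert s E) p \<Longrightarrow> (\<forall>i. Suc i < length p \<longrightarrow> {p!i, p!Suc i} \<noteq> s) \<Longrightarrow> is_path V E p"
  unfolding is_path_def by blast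

lemma path_E2: assumes "is_path V (insert {a,b} E) p" "a \<notin> set p" shows "is_path V E p"
proof (rule path_E[OF assms(1)], intro allI impI)
  fix i assume "Suc i < length p"
  then have "p!i \<in> set p" "p!Suc i \<in> set p" by auto
  show "{p!i, p!Suc i} \<noteq> {a,b}"
  proof
    assume "{p!i, p!Suc i} = {a,b}"
    then have "a \<in> {p!i, p!Suc i}" by simp
    then show False using \<open>p!i \<in> set p\<close> \<open>p!Suc i \<in> set p\<close> assms(2) by auto
  qed
qed

lemma same: assumes "finite E" "{a,b} \<notin> E" "degree_monotone_path V (insert {a,b} E) p" "a \<notin> set p" "b \<notin> set p"
  shows "degree_monotone_path V E p"
proof -
  have pth: "is_path V E p" using path_E2 assms(3,4) by (auto simp: dm_iff)
  have eq: "map (degree (insert {a,b} E)) p = map (degree E) p"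
    using assms(4,5) by (intro map_cong) (auto simp: deg_insert[OF assms(1,2)])
  have "sorted (map (degree E) p) \<or> sorted (rev (map (degree E) p))"
    using assms(3) unfolding degree_monotone_path_def eq by simp
  then show ?thesis using pth by (simp add: degree_monotone_path_def)
qed

lemma degle_path: assumes "finite H" "\<forall>x. degree H x \<le> 1" "is_path V H p" shows "length p \<le> 2"
proof (rule ccontr)
  assume "\<not> length p \<le> 2"
  then have "2 \<le> degree H (p!1)" using interior_deg[OF assms(1,3), of 1] by simp
  then show False using assms(2)[rule_format, of "p!1"] by linarith
qed



lemma L0:
  assumes sg: "simple_graph V E" and mpG: "\<And>q. degree_monotone_path V E q \<Longrightarrow> length q \<le> k - 1"
    and k4: "4 \<le> k" and uV: "u \<in> V" and vV: "v \<in> V" and uv: "u \<noteq> v" and ne: "{u,v} \<notin> E"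
    and mx: "\<forall>x\<in>V. degree E x \<le> degree E v" and du: "degree E u \<le> 1" and dlt: "degree E u < degree E v"
    and p: "degree_monotone_path V (insert {u,v} E) p" and kp: "k \<le> length p" and p0: "p!0 = v"
  shows "\<exists>q. is_path V E q \<and> q!0 = u \<and> k - 1 \<le> length q \<and> (\<forall>i<length q. degree E (q!i) \<le> 2)"
proof -
  define H where "H = insert {u,v} E"
  have fE: "finite E" using sg_finE[OF sg] .
  have dH: "\<And>x. degree H x = degree E x + (if x = u \<or> x = v then 1 else 0)"
    unfolding H_def using deg_insert[OF fE ne] by simp
  have pth: "is_path V H p" and mono: "up (degree H) p \<or> down (degree H) p"
    using p unfolding H_def dm_iff by auto
  have dist: "distinct p" and setp: "set p \<subseteq> V" using pth by (auto simp: is_path_def)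
  have len: "4 \<le> length p" using k4 kp by simp
  have l1: "1 < length p" "0 < length p" using len by auto
  have p1V: "p!1 \<in> V" using setp l1 nth_mem by blast
  have p1v: "p!1 \<noteq> v" using nth_eq_iff_index_eq[OF dist, of 1 0] l1 p0 by auto
  have lt: "degree H (p!1) < degree H (p!0)"
    using dH[of "p!1"] dH[of v] p0 p1v mx p1V dlt by (cases "p!1 = u") auto
  have dn: "down (degree H) p"
  proof -
    have "\<not> up (degree H) p"
    proof
      assume "up (degree H) p"
      then have "degree H (p!0) \<le> degree H (p!Suc 0)" using l1 unfolding up_def by simp
      then show False using lt by simp
    qed
    then show ?thesis using mono by simp
  qed
  show ?thesis
  proof (cases "p!1 = u")
    case True
    define g where "g i = (if i = 0 then 1 else Suc i)" for i :: nat
    define q where "q = u # drop 2 p"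
    have qlen: "length q = length p - 1" using len unfolding q_def by simp
    have qg: "\<And>i. i < length q \<Longrightarrow> q!i = p!(g i)"
    proof -
      fix i assume i: "i < length q"
      show "q!i = p!(g i)"
      proof (cases i)
        case 0 then show ?thesis using True unfolding q_def g_def by simp
      next
        case (Suc j)
        have "q!i = drop 2 p ! j" unfolding q_def Suc by simp
        also have "\<dots> = p!(2 + j)" using len by (intro nth_drop) simp
        finally show ?thesis unfolding g_def Suc by simp
      qed
    qed
    have gl: "\<And>i. i < length q \<Longrightarrow> g i < length p"
    proof -
      fix i assume "i < length q" then show "g i < length p" using qlen len unfolding g_def by (simp; linarith)
    qed
    have gS: "\<And>i. Suc i < length q \<Longrightarrow> q!Suc i = p!(Suc (g i))"
    proof -
      fix i assume "Suc i < length q"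
      then have "q!Suc i = p!(g (Suc i))" by (rule qg)
      moreover have "g (Suc i) = Suc (g i)" unfolding g_def by simp
      ultimately show "q!Suc i = p!(Suc (g i))" by simp
    qed
    have gpos: "\<And>i. 0 < g i" unfolding g_def by simp
    have ginj: "\<And>i j. g i = g j \<Longrightarrow> i = j" unfolding g_def by (auto split: if_splits)
    have qE: "is_path V E q"
      unfolding is_path_def
    proof (intro conjI allI impI)
      show "q \<noteq> []" unfolding q_def by simp
      show "distinct q" unfolding distinct_conv_nth
      proof (intro allI impI)
        fix i j assume "i < length q" "j < length q" "i \<noteq> j"
        then show "q!i \<noteq> q!j" using qg gl ginj nth_eq_iff_index_eq[OF dist, of "g i" "g j"] l1 by metis
      qed
      show "set q \<subseteq> V"
      proof
        fix x assume "x \<in> set q"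
        then obtain i where "i < length q" "q!i = x" by (meson in_set_conv_nth)
        then show "x \<in> V" using qg gl setp by (metis nth_mem subsetD)
      qed
    next
      fix i assume i: "Suc i < length q"
      have j: "Suc (g i) < length p" using gl[OF i] unfolding g_def using i qlen by (auto split: if_splits)
      have e: "{p!(g i), p!Suc (g i)} \<in> H" using path_edge[OF pth j] .
      have "p!(g i) \<noteq> v" "p!Suc (g i) \<noteq> v"
        using nth_eq_iff_index_eq[OF dist, of "g i" 0] nth_eq_iff_index_eq[OF dist, of "Suc (g i)" 0] j gpos[of i] p0 l1 by auto
      then have "{p!(g i), p!Suc (g i)} \<noteq> {u,v}" by (metis insertCI insertE singletonD)
      then have "{p!(g i), p!Suc (g i)} \<in> E" using e unfolding H_def by simp
      then show "{q!i, q!Suc i} \<in> E" using qg[of i] gS[OF i] i by simp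
    qed
    have qdeg: "\<forall>i<length q. degree E (q!i) \<le> 2"
    proof (intro allI impI)
      fix i assume i: "i < length q"
      show "degree E (q!i) \<le> 2"
      proof (cases "i = 0")
        case True then show ?thesis using qg[OF i] \<open>p!1 = u\<close> du unfolding g_def by simp
      next
        case False
        have jl: "Suc i < length p" using gl[OF i] False unfolding g_def by simp
        have "p!Suc i \<noteq> v" "p!Suc i \<noteq> u"
          using nth_eq_iff_index_eq[OF dist, of "Suc i" 0] nth_eq_iff_index_eq[OF dist, of "Suc i" 1] jl False p0 True l1 by auto
        then have "degree E (p!Suc i) = degree H (p!Suc i)" using dH by simp
        also have "\<dots> \<le> degree H (p!1)" using down_mono[OF dn, of 1 "Suc i"] jl False by simp
        also have "\<dots> \<le> 2" using dH[of u] True du by simp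
        finally show ?thesis using qg[OF i] False unfolding g_def by simp
      qed
    qed
    show ?thesis using qE qdeg qlen kp qg[of 0] True unfolding g_def q_def by auto
  next
    case False
    have noe: "\<forall>j. Suc j < length p \<longrightarrow> {p!j, p!Suc j} \<noteq> {u,v}"
    proof (intro allI impI notI)
      fix j assume j: "Suc j < length p" and eq: "{p!j, p!Suc j} = {u,v}"
      then have "v \<in> {p!j, p!Suc j}" by simp
      moreover have "p!Suc j \<noteq> v" using nth_eq_iff_index_eq[OF dist, of "Suc j" 0] j p0 l1 by auto
      ultimately have "p!j = v" by simp
      then have "j = 0" using nth_eq_iff_index_eq[OF dist, of j 0] j p0 l1 by auto
      then have "p!1 = u" using eq \<open>p!j = v\<close> uv by (auto simp: doubleton_eq_iff)
      then show False using False by simp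
    qed
    have pE: "is_path V E p" using path_E[OF pth[unfolded H_def] noe] .
    have uint: "\<And>j. 0 < j \<Longrightarrow> Suc j < length p \<Longrightarrow> p!j \<noteq> u"
    proof
      fix j assume "0 < j" "Suc j < length p" "p!j = u"
      then have "2 \<le> degree E u" using interior_deg[OF fE pE, of j] by simp
      then show False using du by simp
    qed
    have "down (degree E) p"
      unfolding down_def
    proof (intro allI impI)
      fix j assume j: "Suc j < length p"
      have h: "degree H (p!Suc j) \<le> degree H (p!j)" using dn j unfolding down_def by blast
      have sv: "p!Suc j \<noteq> v" using nth_eq_iff_index_eq[OF dist, of "Suc j" 0] j p0 l1 by auto
      have "p!Suc j \<in> set p" using j by (rule nth_mem)
      then have sV: "p!Suc j \<in> V" using setp by blast
      show "degree E (p!Suc j) \<le> degree E (p!j)"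
      proof (cases "p!j = v")
        case True then show ?thesis using mx sV by simp
      next
        case False
        have "j \<noteq> 0" using False p0 by (cases j) auto
        then have "p!j \<noteq> u" using uint j by simp
        then show ?thesis using h dH[of "p!j"] dH[of "p!Suc j"] False sv by (auto split: if_splits)
      qed
    qed
    then have "degree_monotone_path V E p" using pE by (simp add: dm_iff)
    then show ?thesis using mpG kp k4 by fastforce
  qed
qed

lemma L1:
  assumes sg: "simple_graph V E" and mpG: "\<And>q. degree_monotone_path V E q \<Longrightarrow> length q \<le> k - 1"
    and k4: "4 \<le> k" and uV: "u \<in> V" and vV: "v \<in> V" and uv: "u \<noteq> v" and ne: "{u,v} \<notin> E"
    and du: "degree E u \<le> 1"
    and p: "degree_monotone_path V (insert {u,v} E) p" and kp: "k \<le> length p" and p0: "p!0 = u"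
    and vnot: "v \<notin> set p"
  shows "\<exists>q. is_path V E q \<and> q!0 = u \<and> k - 1 \<le> length q \<and> (\<forall>i<length q. degree E (q!i) \<le> 2)"
proof -
  define H where "H = insert {u,v} E"
  have fE: "finite E" using sg_finE[OF sg] .
  have dH: "\<And>x. degree H x = degree E x + (if x = u \<or> x = v then 1 else 0)"
    unfolding H_def using deg_insert[OF fE ne] by simp
  have pth: "is_path V H p" and mono: "up (degree H) p \<or> down (degree H) p"
    using p unfolding H_def dm_iff by auto
  have dist: "distinct p" and setp: "set p \<subseteq> V" using pth by (auto simp: is_path_def)
  have len: "4 \<le> length p" using k4 kp by simp
  have l1: "1 < length p" "0 < length p" using len by auto
  have pth': "is_path V (insert {v,u} E) p" using pth unfolding H_def by (simp add: insert_commute)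
  have pE: "is_path V E p" using path_E2[OF pth' vnot] .
  have eqd: "\<And>i. 0 < i \<Longrightarrow> i < length p \<Longrightarrow> degree H (p!i) = degree E (p!i)"
  proof -
    fix i assume i: "0 < i" "i < length p"
    have "p!i \<noteq> u" using nth_eq_iff_index_eq[OF dist, of i 0] i l1 p0 by auto
    moreover have "p!i \<noteq> v" using vnot i(2) nth_mem by metis
    ultimately show "degree H (p!i) = degree E (p!i)" using dH by simp
  qed
  have d0: "degree H (p!0) = degree E u + 1" using dH p0 by simp
  show ?thesis
  proof (cases "up (degree H) p")
    case True
    have "up (degree E) p"
      unfolding up_def
    proof (intro allI impI)
      fix j assume j: "Suc j < length p"
      have h: "degree H (p!j) \<le> degree H (p!Suc j)" using True j unfolding up_def by blast
      show "degree E (p!j) \<le> degree E (p!Suc j)"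
      proof (cases "j = 0")
        case True then show ?thesis using h d0 eqd[of "Suc j"] j p0 by simp
      next
        case False then show ?thesis using h eqd[of j] eqd[of "Suc j"] j by simp
      qed
    qed
    then have "degree_monotone_path V E p" using pE by (simp add: dm_iff)
    then show ?thesis using mpG kp k4 by fastforce
  next
    case False
    then have dn: "down (degree H) p" using mono by simp
    have "\<forall>i<length p. degree E (p!i) \<le> 2"
    proof (intro allI impI)
      fix i assume i: "i < length p"
      show "degree E (p!i) \<le> 2"
      proof (cases "i = 0")
        case True then show ?thesis using du p0 by simp
      next
        case False
        then have "degree E (p!i) = degree H (p!i)" using eqd i by simp
        also have "\<dots> \<le> degree H (p!0)" using down_mono[OF dn, of 0 i] i by simp
        finally show ?thesis using d0 du by simp
      qed
    qed
    then show ?thesis using pE p0 kp by auto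
  qed
qed



lemma rev0: "p \<noteq> [] \<Longrightarrow> rev p ! 0 = p ! (length p - 1)"
  by (simp add: rev_nth)

lemma Lmain:
  assumes sg: "simple_graph V E" and mpG: "\<And>q. degree_monotone_path V E q \<Longrightarrow> length q \<le> k - 1"
    and k4: "4 \<le> k" and uV: "u \<in> V" and vV: "v \<in> V" and uv: "u \<noteq> v" and ne: "{u,v} \<notin> E"
    and mx: "\<forall>x\<in>V. degree E x \<le> degree E v" and du: "degree E u \<le> 1" and dlt: "degree E u < degree E v"
    and p: "degree_monotone_path V (insert {u,v} E) p" and kp: "k \<le> length p"
  shows "\<exists>q. is_path V E q \<and> q!0 = u \<and> k - 1 \<le> length q \<and> (\<forall>i<length q. degree E (q!i) \<le> 2)"
proof -
  define H where "H = insert {u,v} E"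
  have fE: "finite E" using sg_finE[OF sg] .
  have dH: "\<And>x. degree H x = degree E x + (if x = u \<or> x = v then 1 else 0)"
    unfolding H_def using deg_insert[OF fE ne] by simp
  have pth: "is_path V H p" and mono: "up (degree H) p \<or> down (degree H) p"
    using p unfolding H_def dm_iff by auto
  have dist: "distinct p" and setp: "set p \<subseteq> V" using pth by (auto simp: is_path_def)
  have len: "4 \<le> length p" using k4 kp by simp
  have pne: "p \<noteq> []" using len by auto
  have prev: "degree_monotone_path V (insert {u,v} E) (rev p)" using dm_rev[OF p] .
  have strict: "\<And>x. x \<in> V \<Longrightarrow> x \<noteq> v \<Longrightarrow> degree H x < degree H v"
    using dH mx dlt by fastforce
  show ?thesis
  proof (cases "v \<in> set p")
    case True
    then obtain j where j: "j < length p" "p!j = v" by (meson in_set_conv_nth)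
    consider "j = 0" | "Suc j = length p" | "0 < j \<and> Suc j < length p" using j by linarith
    then show ?thesis
    proof cases
      case 1 then show ?thesis using L0[OF sg mpG k4 uV vV uv ne mx du dlt p kp] j by simp
    next
      case 2
      have "rev p ! 0 = v" proof -
        have "length p - 1 = j" using 2 by simp
        then show ?thesis using rev0[OF pne] j by simp
      qed
      then show ?thesis using L0[OF sg mpG k4 uV vV uv ne mx du dlt prev] kp by simp
    next
      case 3
      have a: "p!(j-1) \<noteq> v" using nth_eq_iff_index_eq[OF dist, of "j-1" j] j 3 by (auto; linarith)
      have b: "p!Suc j \<noteq> v" using nth_eq_iff_index_eq[OF dist, of "Suc j" j] j 3 by auto
      have "p!(j-1) \<in> V" "p!Suc j \<in> V" using setp 3 j by (auto dest: nth_mem[of "j-1" p] nth_mem[of "Suc j" p])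
      then have "degree H (p!(j-1)) < degree H (p!j)" "degree H (p!Suc j) < degree H (p!j)"
        using strict a b j by auto
      then show ?thesis using no_strict_max[OF mono, of j] 3 by simp
    qed
  next
    case False
    note vnot = False
    show ?thesis
    proof (cases "u \<in> set p")
      case False
      have "degree_monotone_path V E p" using same[OF fE ne p False vnot] .
      then show ?thesis using mpG kp k4 by fastforce
    next
      case True
      then obtain j where j: "j < length p" "p!j = u" by (meson in_set_conv_nth)
      have pth': "is_path V (insert {v,u} E) p" using pth unfolding H_def by (simp add: insert_commute)
      have pE: "is_path V E p" using path_E2[OF pth' vnot] .
      consider "j = 0" | "Suc j = length p" | "0 < j \<and> Suc j < length p" using j by linarith
      then show ?thesis
      proof cases
        case 1 then show ?thesis using L1[OF sg mpG k4 uV vV uv ne du p kp _ vnot] j by simp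
      next
        case 2
        have "rev p ! 0 = u" proof -
        have "length p - 1 = j" using 2 by simp
        then show ?thesis using rev0[OF pne] j by simp
      qed
        then show ?thesis using L1[OF sg mpG k4 uV vV uv ne du prev] kp vnot by simp
      next
        case 3
        then have "2 \<le> degree E u" using interior_deg[OF fE pE, of j] j by simp
        then show ?thesis using du by simp
      qed
    qed
  qed
qed



lemma path_take: assumes "is_path V E p" "0 < n" shows "is_path V E (take n p)"
  using assms unfolding is_path_def
  by (auto simp: nth_take dest: in_set_takeD)

lemma path_snoc: assumes "is_path V E p" "y \<notin> set p" "y \<in> V" "{p!(length p - 1), y} \<in> E"
  shows "is_path V E (p @ [y])"
  unfolding is_path_def
proof (intro conjI allI impI)
  show "distinct (p @ [y])" using assms(1,2) by (simp add: is_path_def)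
  show "set (p @ [y]) \<subseteq> V" using assms(1,3) by (simp add: is_path_def)
next
  fix i assume i: "Suc i < length (p @ [y])"
  have pne: "p \<noteq> []" using assms(1) by (simp add: is_path_def)
  show "{(p @ [y]) ! i, (p @ [y]) ! Suc i} \<in> E"
  proof (cases "Suc i < length p")
    case True then show ?thesis using assms(1) by (simp add: nth_append is_path_def)
  next
    case False
    then have "i = length p - 1" "Suc i = length p" using i pne by auto
    then show ?thesis using assms(4) by (simp add: nth_append)
  qed
qed simp

lemma up_pat: assumes "\<forall>i<length r. 0 < i \<longrightarrow> 2 \<le> f (r!i)"
  "\<forall>i. 0 < i \<longrightarrow> Suc i < length r \<longrightarrow> f (r!i) = 2" "f (r!0) \<le> (2::nat)"
  shows "up f r"
  unfolding up_def
proof (intro allI impI)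
  fix j assume j: "Suc j < length r"
  show "f (r!j) \<le> f (r!Suc j)"
  proof (cases "j = 0")
    case True then show ?thesis using assms(1,3) j by fastforce
  next
    case False then show ?thesis using assms(1,2) j by fastforce
  qed
qed

lemma Pendant:
  assumes sg: "simple_graph V E" and mpG: "\<And>q. degree_monotone_path V E q \<Longrightarrow> length q \<le> k - 1"
    and k4: "4 \<le> k" and noiso: "\<forall>x\<in>V. 1 \<le> degree E x"
    and q: "is_path V E q" and q0: "degree E (q!0) = 1" and lq: "k - 1 \<le> length q"
    and qd: "\<forall>i<length q. degree E (q!i) \<le> 2"
  shows "\<exists>z. is_path V E z \<and> (length z = k - 1 \<or> length z = k) \<and> degree E (z!0) = 1
     \<and> degree E (z!(length z - 1)) = 1 \<and> (\<forall>i. 0 < i \<longrightarrow> Suc i < length z \<longrightarrow> degree E (z!i) = 2)"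
proof -
  have fE: "finite E" using sg_finE[OF sg] .
  define L where "L = length q"
  have L3: "3 \<le> L" using lq k4 unfolding L_def by simp
  have dist: "distinct q" and setq: "set q \<subseteq> V" using q by (auto simp: is_path_def)
  have qV: "\<And>i. i < L \<Longrightarrow> q!i \<in> V" using setq unfolding L_def by (meson nth_mem subsetD)
  have int2: "\<And>i. 0 < i \<Longrightarrow> Suc i < L \<Longrightarrow> degree E (q!i) = 2"
  proof -
    fix i assume "0 < i" "Suc i < L"
    then have "2 \<le> degree E (q!i)" "degree E (q!i) \<le> 2" using interior_deg[OF fE q, of i] qd unfolding L_def by auto
    then show "degree E (q!i) = 2" by simp
  qed
  have pos: "\<And>i. i < L \<Longrightarrow> 1 \<le> degree E (q!i)" using noiso qV by blast
  define l where "l = q!(L-1)"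
  have "L - 1 < L" using L3 by simp
  then have "1 \<le> degree E l" "degree E l \<le> 2" using qd pos[of "L-1"] unfolding l_def L_def by auto
  then have dl: "degree E l = 1 \<or> degree E l = 2" by linarith
  show ?thesis
  proof (cases "degree E l = 1")
    case True
    define r where "r = take (L-1) q"
    have rp: "is_path V E r" unfolding r_def using path_take[OF q] L3 by simp
    have lr: "length r = L - 1" unfolding r_def L_def by simp
    have rn: "\<And>i. i < L - 1 \<Longrightarrow> r!i = q!i" unfolding r_def by simp
    have "up (degree E) r"
    proof (rule up_pat)
      show "\<forall>i<length r. 0 < i \<longrightarrow> 2 \<le> degree E (r!i)" using rn int2 lr by auto
      show "\<forall>i. 0 < i \<longrightarrow> Suc i < length r \<longrightarrow> degree E (r!i) = 2" using rn int2 lr by auto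
      show "degree E (r!0) \<le> 2" using rn[of 0] q0 L3 by simp
    qed
    then have "L - 1 \<le> k - 1" using mpG[of r] rp lr by (simp add: dm_iff)
    then have "L = k - 1 \<or> L = k" using lq k4 unfolding L_def by linarith
    then show ?thesis using q q0 True int2 unfolding l_def L_def by blast
  next
    case False
    then have dl2: "degree E l = 2" using dl by simp
    have all2: "\<And>i. 0 < i \<Longrightarrow> i < L \<Longrightarrow> degree E (q!i) = 2"
    proof -
      fix i assume i: "0 < i" "i < L"
      show "degree E (q!i) = 2"
      proof (cases "Suc i < L")
        case True then show ?thesis using int2 i by simp
      next
        case False then have "i = L - 1" using i by simp
        then show ?thesis using dl2 unfolding l_def by simp
      qed
    qed
    have "up (degree E) q"
    proof (rule up_pat)
      show "\<forall>i<length q. 0 < i \<longrightarrow> 2 \<le> degree E (q!i)"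
      proof (intro allI impI)
        fix i assume "i < length q" "0 < i"
        then show "2 \<le> degree E (q!i)" using all2 unfolding L_def by simp
      qed
      show "\<forall>i. 0 < i \<longrightarrow> Suc i < length q \<longrightarrow> degree E (q!i) = 2" using int2 unfolding L_def by auto
      show "degree E (q!0) \<le> 2" using q0 by simp
    qed
    then have "L \<le> k - 1" using mpG[of q] q unfolding L_def by (simp add: dm_iff)
    then have Lk: "L = k - 1" using lq unfolding L_def by simp
    have e1: "{l, q!(L-2)} \<in> E" using path_edge[OF q, of "L-2"] L3 unfolding l_def L_def
      by (simp add: insert_commute Suc_diff_Suc numeral_2_eq_2)
    obtain y where y: "{l,y} \<in> E" "y \<noteq> q!(L-2)" using other_nbr[OF sg dl2 e1] by blast
    have yV: "y \<in> V" and yl: "y \<noteq> l" using sg_edge[OF sg y(1)] by auto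
    have ynot: "y \<notin> set q"
    proof
      assume "y \<in> set q"
      then obtain j where j: "j < L" "q!j = y" unfolding L_def by (meson in_set_conv_nth)
      consider "j = L - 1" | "j = L - 2" | "j = 0" | "0 < j \<and> j + 2 < L" using j L3 by linarith
      then show False
      proof cases
        case 1 then show False using j yl unfolding l_def by simp
      next
        case 2 then show False using j y by simp
      next
        case 3
        have "{q!0, q!1} \<in> E" using path_edge[OF q, of 0] L3 unfolding L_def by simp
        moreover have "{q!0, l} \<in> E" using y(1) j 3 by (simp add: insert_commute)
        ultimately have "l = q!1" using only_nbr1[OF sg q0] by blast
        then show False using nth_eq_iff_index_eq[OF dist, of "L-1" 1] L3 unfolding l_def L_def by (simp; linarith)
      next
        case 4
        have a1: "{q!j, q!(j-1)} \<in> E" using path_edge[OF q, of "j-1"] 4 unfolding L_def by (simp add: insert_commute)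
        have a2: "{q!j, q!Suc j} \<in> E" using path_edge[OF q, of "j"] 4 unfolding L_def by simp
        have ne: "q!(j-1) \<noteq> q!Suc j" using nth_eq_iff_index_eq[OF dist, of "j-1" "Suc j"] 4 unfolding L_def by (simp; linarith)
        have "{q!j, l} \<in> E" using y(1) j by (simp add: insert_commute)
        then have "l = q!(j-1) \<or> l = q!Suc j" using only_nbr2[OF sg int2[of j] a1 a2 ne] 4 by simp
        then show False using nth_eq_iff_index_eq[OF dist, of "L-1" "j-1"] nth_eq_iff_index_eq[OF dist, of "L-1" "Suc j"] 4 
          unfolding l_def L_def by (auto; linarith)
      qed
    qed
    define z where "z = q @ [y]"
    have zp: "is_path V E z" unfolding z_def using path_snoc[OF q ynot yV] y(1) unfolding l_def L_def by simp
    have lz: "length z = k" using Lk k4 unfolding z_def L_def by simp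
    have zq: "\<And>i. i < L \<Longrightarrow> z!i = q!i" unfolding z_def L_def by (simp add: nth_append)
    have zl: "z!L = y" unfolding z_def L_def by simp
    have dy: "degree E y = 1"
    proof (rule ccontr)
      assume "degree E y \<noteq> 1"
      then have dy2: "2 \<le> degree E y" using noiso yV by fastforce
      have "up (degree E) z"
      proof (rule up_pat)
        show "\<forall>i<length z. 0 < i \<longrightarrow> 2 \<le> degree E (z!i)"
        proof (intro allI impI)
          fix i assume i: "i < length z" "0 < i"
          show "2 \<le> degree E (z!i)"
          proof (cases "i = L")
            case True then show ?thesis using zl dy2 by simp
          next
            case False
            then have "i < L" using i lz Lk k4 by linarith
            then show ?thesis using zq all2 i by simp
          qed
        qed
        show "\<forall>i. 0 < i \<longrightarrow> Suc i < length z \<longrightarrow> degree E (z!i) = 2"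
        proof (intro allI impI)
          fix i assume i: "0 < i" "Suc i < length z"
          then have "i < L" using lz Lk k4 by linarith
          then show "degree E (z!i) = 2" using zq all2 i by simp
        qed
        show "degree E (z!0) \<le> 2" using zq[of 0] q0 L3 by simp
      qed
      then have "k \<le> k - 1" using mpG[of z] zp lz by (simp add: dm_iff)
      then show False using k4 by simp
    qed
    have "\<forall>i. 0 < i \<longrightarrow> Suc i < length z \<longrightarrow> degree E (z!i) = 2"
    proof (intro allI impI)
      fix i assume i: "0 < i" "Suc i < length z"
      then have "i < L" using lz Lk k4 by linarith
      then show "degree E (z!i) = 2" using zq all2 i by simp
    qed
    moreover have "z!(length z - 1) = y"
    proof -
      have "length z - 1 = L" using lz Lk k4 by simp
      then show ?thesis using zl by simp
    qed
    moreover have "z!0 = q!0" using zq L3 by simp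
    ultimately show ?thesis using zp lz dy q0 by auto
  qed
qed



lemma PathComp:
  assumes sat: "saturated k V E" and k4: "4 \<le> k" and z: "is_path V E z"
    and lz: "length z = k - 1 \<or> length z = k" and z0: "degree E (z!0) = 1"
    and zl: "degree E (z!(length z - 1)) = 1"
    and zi: "\<forall>i. 0 < i \<longrightarrow> Suc i < length z \<longrightarrow> degree E (z!i) = 2"
  shows False
proof -
  have sg: "simple_graph V E" using sat by (simp add: saturated_def)
  have fE: "finite E" using sg_finE[OF sg] .
  define m where "m = length z"
  have m3: "3 \<le> m" using lz k4 unfolding m_def by auto
  have dist: "distinct z" and setz: "set z \<subseteq> V" using z by (auto simp: is_path_def)
  have zin: "\<And>i. i < m \<Longrightarrow> z!i \<in> set z" unfolding m_def by (rule nth_mem)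
  have zV: "\<And>i. i < m \<Longrightarrow> z!i \<in> V" using setz unfolding m_def by (meson nth_mem subsetD)
  have ed: "\<And>i. Suc i < m \<Longrightarrow> {z!i, z!Suc i} \<in> E" using path_edge[OF z] unfolding m_def by simp
  have zne: "\<And>i j. i < m \<Longrightarrow> j < m \<Longrightarrow> i \<noteq> j \<Longrightarrow> z!i \<noteq> z!j"
    using nth_eq_iff_index_eq[OF dist] unfolding m_def by simp
  have clos: "\<And>x y. x \<in> set z \<Longrightarrow> {x,y} \<in> E \<Longrightarrow> y \<in> set z"
  proof -
    fix x y assume x: "x \<in> set z" and xy: "{x,y} \<in> E"
    obtain i where i: "i < m" "z!i = x" using x unfolding m_def by (meson in_set_conv_nth)
    consider "i = 0" | "i = m - 1" | "0 < i \<and> Suc i < m" using i by linarith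
    then show "y \<in> set z"
    proof cases
      case 1
      have "y = z!1" using only_nbr1[OF sg z0 ed[of 0]] xy i 1 m3 by simp
      then show ?thesis using m3 zin[of 1] by simp
    next
      case 2
      have e: "{z!(m-1), z!(m-2)} \<in> E" using ed[of "m-2"] m3 by (simp add: insert_commute Suc_diff_Suc numeral_2_eq_2)
      have "y = z!(m-2)" using only_nbr1[OF sg zl[folded m_def] e] xy i 2 by simp
      then show ?thesis using m3 zin[of "m-2"] by simp
    next
      case 3
      have e1: "{z!i, z!(i-1)} \<in> E" using ed[of "i-1"] 3 by (simp add: insert_commute)
      have e2: "{z!i, z!Suc i} \<in> E" using ed[of i] 3 by simp
      have ne: "z!(i-1) \<noteq> z!Suc i" using zne[of "i-1" "Suc i"] 3 by (simp; linarith)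
      have dzi: "degree E (z!i) = 2" using zi 3 unfolding m_def by simp
      have "{z!i, y} \<in> E" using xy i by simp
      then have "y = z!(i-1) \<or> y = z!Suc i" using only_nbr2[OF sg dzi e1 e2 ne] by simp
      then show ?thesis using 3 zin[of "i-1"] zin[of "Suc i"] by auto
    qed
  qed
  have key: "\<And>jb. 2 \<le> jb \<Longrightarrow> jb < m \<Longrightarrow> \<exists>p. degree_monotone_path V (insert {z!0, z!jb} E) p \<and> k \<le> length p \<and> set p \<subseteq> set z"
  proof -
    fix jb assume jb: "2 \<le> jb" "jb < m"
    have ab: "z!0 \<noteq> z!jb" using zne[of 0 jb] jb by simp
    have ne: "{z!0, z!jb} \<notin> E"
    proof
      assume "{z!0, z!jb} \<in> E"
      then have "z!jb = z!1" using only_nbr1[OF sg z0 ed[of 0]] m3 by simp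
      then show False using zne[of jb 1] jb by simp
    qed
    obtain p where p: "degree_monotone_path V (insert {z!0, z!jb} E) p" "k \<le> length p"
      using sat_path[OF sat zV[of 0] zV[of jb] ab ne] jb m3 by auto
    have touch: "z!0 \<in> set p \<or> z!jb \<in> set p"
    proof (rule ccontr)
      assume "\<not> (z!0 \<in> set p \<or> z!jb \<in> set p)"
      then have "degree_monotone_path V E p" using same[OF fE ne p(1)] by simp
      then show False using mpG[OF sat] p(2) k4 by fastforce
    qed
    have pth: "is_path V (insert {z!0, z!jb} E) p" using p(1) by (simp add: dm_iff)
    have closH: "\<forall>x y. x \<in> set z \<longrightarrow> {x,y} \<in> insert {z!0, z!jb} E \<longrightarrow> y \<in> set z"
    proof (intro allI impI)
      fix x y assume x: "x \<in> set z" and xy: "{x,y} \<in> insert {z!0, z!jb} E"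
      show "y \<in> set z"
      proof (cases "{x,y} = {z!0, z!jb}")
        case True
        then have "y \<in> {z!0, z!jb}" by (metis insertI1 insert_commute)
        moreover have "z!0 \<in> set z" "z!jb \<in> set z" using zin jb m3 by auto
        ultimately show ?thesis by auto
      next
        case False then show ?thesis using clos x xy by auto
      qed
    qed
    have "set p \<subseteq> set z"
    proof (cases "z!0 \<in> set p")
      case True then show ?thesis using closure[OF pth closH True zin[of 0]] m3 by simp
    next
      case False then have "z!jb \<in> set p" using touch by simp
      then show ?thesis using closure[OF pth closH _ zin[of jb]] jb by simp
    qed
    then show "\<exists>p. degree_monotone_path V (insert {z!0, z!jb} E) p \<and> k \<le> length p \<and> set p \<subseteq> set z"
      using p by blast
  qed
  have lenle: "\<And>p. set p \<subseteq> set z \<Longrightarrow> distinct p \<Longrightarrow> length p \<le> m"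
    unfolding m_def using dist by (metis card_mono distinct_card finite_set)
  show False
  proof (cases "m = k - 1")
    case True
    have "2 \<le> m-1" "m-1 < m" using m3 by auto
    then obtain p where p: "degree_monotone_path V (insert {z!0, z!(m-1)} E) p" "k \<le> length p" "set p \<subseteq> set z"
      using key by blast
    have "distinct p" using p(1) by (simp add: dm_iff is_path_def)
    then have "length p \<le> m" using lenle p(3) by blast
    then show False using p(2) True k4 by linarith
  next
    case False
    then have mk: "m = k" using lz unfolding m_def by simp
    define a where "a = z!0"
    define y where "y = z!(k-2)"
    define x where "x = z!(k-1)"
    define H where "H = insert {a, y} E"
    have "2 \<le> k-2" "k-2 < m" using mk k4 by auto
    then obtain p where p: "degree_monotone_path V H p" "k \<le> length p" "set p \<subseteq> set z"
      using key unfolding H_def a_def y_def by blast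
    have pth: "is_path V H p" and mono: "up (degree H) p \<or> down (degree H) p" using p(1) by (auto simp: dm_iff)
    have dp: "distinct p" using pth by (simp add: is_path_def)
    have "card (set p) = card (set z)"
      using p(2,3) distinct_card[OF dp] distinct_card[OF dist] mk lenle[OF p(3) dp] unfolding m_def by simp
    then have "set p = set z" using p(3) by (simp add: card_subset_eq)
    then have xp: "x \<in> set p" using mk k4 zin[of "k-1"] unfolding x_def by simp
    have ay: "a \<noteq> y" "x \<noteq> a" "x \<noteq> y" using zne[of 0 "k-2"] zne[of "k-1" 0] zne[of "k-1" "k-2"] mk k4
      unfolding a_def y_def x_def by auto
    have neE: "{a,y} \<notin> E"
    proof
      assume "{a,y} \<in> E"
      then have "y = z!1" using only_nbr1[OF sg z0 ed[of 0]] m3 unfolding a_def by simp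
      then show False using zne[of "k-2" 1] mk k4 unfolding y_def by (simp; linarith)
    qed
    have dH: "\<And>w. degree H w = degree E w + (if w = a \<or> w = y then 1 else 0)"
      unfolding H_def using deg_insert[OF fE neE] by simp
    have dx: "degree E x = 1" using zl mk unfolding x_def m_def by simp
    have dy: "degree E y = 2" using zi mk k4 unfolding y_def m_def by simp
    have exy: "{x,y} \<in> E" using ed[of "k-2"] mk k4 unfolding x_def y_def
      by (simp add: insert_commute Suc_diff_Suc numeral_2_eq_2)
    have eyx: "{y,x} \<in> E" using exy by (simp add: insert_commute)
    have eyw: "{y, z!(k-3)} \<in> E" using ed[of "k-3"] mk k4 unfolding y_def
      by (simp add: insert_commute Suc_diff_Suc numeral_2_eq_2 numeral_3_eq_3)
    have nw: "z!(k-3) \<noteq> x" using zne[of "k-3" "k-1"] mk k4 unfolding x_def by simp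
    have w2: "degree E (z!(k-3)) = 2" using zi mk k4 unfolding m_def by simp
    have wa: "z!(k-3) \<noteq> a" "z!(k-3) \<noteq> y" using zne[of "k-3" 0] zne[of "k-3" "k-2"] mk k4
      unfolding a_def y_def by auto
    show False
    proof (rule local_max[OF pth mono _ xp])
      show "3 \<le> length p" using p(2) k4 by simp
      show "\<forall>w. {x,w} \<in> H \<longrightarrow> w = y"
      proof (intro allI impI)
        fix w assume "{x,w} \<in> H"
        moreover have "{x,w} \<noteq> {a,y}" using ay by (auto simp: doubleton_eq_iff)
        ultimately have "{x,w} \<in> E" unfolding H_def by simp
        then show "w = y" using only_nbr1[OF sg dx exy] by simp
      qed
      show "degree H x < degree H y" using dH[of x] dH[of y] dx dy ay by simp
      show "\<forall>w. {y,w} \<in> H \<longrightarrow> w \<noteq> x \<longrightarrow> degree H w < degree H y"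
      proof (intro allI impI)
        fix w assume w: "{y,w} \<in> H" "w \<noteq> x"
        show "degree H w < degree H y"
        proof (cases "{y,w} = {a,y}")
          case True
          then have "w = a" using ay by (auto simp: doubleton_eq_iff)
          then show ?thesis using dH[of a] dH[of y] dy z0 ay unfolding a_def by simp
        next
          case False
          then have "{y,w} \<in> E" using w unfolding H_def by simp
          then have "w = z!(k-3)" using only_nbr2[OF sg dy eyw eyx nw, of w] w(2) by blast
          then show ?thesis using dH[of w] dH[of y] dy w2 wa by simp
        qed
      qed
    qed
  qed
qed



lemma handshake: assumes sg: "simple_graph V E" shows "(\<Sum>x\<in>V. degree E x) = 2 * card E"
proof -
  have fE: "finite E" using sg_finE[OF sg] .
  have fV: "finite V" using sg by (simp add: simple_graph_def)
  have eV: "\<And>e. e \<in> E \<Longrightarrow> e \<subseteq> V \<and> card e = 2" using sg by (simp add: simple_graph_def)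
  have "(\<Sum>x\<in>V. degree E x) = (\<Sum>x\<in>V. \<Sum>e\<in>E. if x \<in> e then 1 else 0)"
  proof (rule sum.cong[OF refl])
    fix x
    have "degree E x = (\<Sum>e\<in>{e\<in>E. x \<in> e}. 1)" by (simp add: degree_def)
    also have "\<dots> = (\<Sum>e\<in>E. if x \<in> e then 1 else 0)" using fE by (rule sum.inter_filter)
    finally show "degree E x = (\<Sum>e\<in>E. if x \<in> e then 1 else 0)" .
  qed
  also have "\<dots> = (\<Sum>e\<in>E. \<Sum>x\<in>V. if x \<in> e then 1 else 0)" by (rule sum.swap)
  also have "\<dots> = (\<Sum>e\<in>E. 2)"
  proof (rule sum.cong[OF refl])
    fix e assume e: "e \<in> E"
    have "(\<Sum>x\<in>V. if x \<in> e then 1 else 0) = (\<Sum>x\<in>{x\<in>V. x \<in> e}. 1::nat)"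
      using fV by (rule sum.inter_filter[symmetric])
    also have "\<dots> = card {x\<in>V. x \<in> e}" by simp
    also have "{x\<in>V. x \<in> e} = e" using eV[OF e] by auto
    finally show "(\<Sum>x\<in>V. if x \<in> e then 1 else 0) = (2::nat)" using eV[OF e] by simp
  qed
  also have "\<dots> = 2 * card E" by simp
  finally show ?thesis .
qed

lemma count_leaves:
  assumes sg: "simple_graph V E" and vV: "v \<in> V" and noiso: "\<forall>x\<in>V. 1 \<le> degree E x"
    and cE: "card E < card V" and d2: "2 \<le> degree E v"
  shows "degree E v \<le> card {x\<in>V. degree E x = 1}"
proof -
  define L where "L = {x\<in>V. degree E x = 1}"
  have fV: "finite V" using sg by (simp add: simple_graph_def)
  define g where "g x = degree E x + (if x \<in> L then 1 else 0)" for x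
  have s1: "(\<Sum>x\<in>V. g x) = (\<Sum>x\<in>V. degree E x) + (\<Sum>x\<in>V. if x \<in> L then 1 else 0)"
    unfolding g_def by (rule sum.distrib)
  have "(\<Sum>x\<in>V. if x \<in> L then 1 else (0::nat)) = (\<Sum>x\<in>{x\<in>V. x \<in> L}. 1)"
    using fV by (rule sum.inter_filter[symmetric])
  also have "\<dots> = card L" unfolding L_def by simp
  finally have s2: "(\<Sum>x\<in>V. if x \<in> L then 1 else (0::nat)) = card L" .
  have "(\<Sum>x\<in>V. g x) = g v + (\<Sum>x\<in>V-{v}. g x)" using sum.remove[OF fV vV] .
  moreover have "g v \<ge> degree E v" unfolding g_def by simp
  moreover have "(\<Sum>x\<in>V-{v}. g x) \<ge> card (V - {v}) * 2"
  proof -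
    have "\<And>x. x \<in> V - {v} \<Longrightarrow> 2 \<le> g x"
    proof -
      fix x assume x: "x \<in> V - {v}"
      then have "1 \<le> degree E x" using noiso by auto
      then show "2 \<le> g x" using x unfolding g_def L_def by auto
    qed
    then have "of_nat (card (V - {v})) * 2 \<le> (\<Sum>x\<in>V-{v}. g x)" by (rule sum_bounded_below)
    then show ?thesis by simp
  qed
  moreover have "card (V - {v}) = card V - 1" using fV vV by simp
  ultimately have "(\<Sum>x\<in>V. g x) \<ge> degree E v + (card V - 1) * 2" by simp
  then have "2 * card E + card L \<ge> degree E v + (card V - 1) * 2" using s1 s2 handshake[OF sg] by simp
  then show ?thesis using cE unfolding L_def by linarith
qed



lemma Star:
  assumes sat: "saturated k V E" and k4: "4 \<le> k" and vV: "v \<in> V"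
    and Nleaf: "\<forall>x\<in>N E v. degree E x = 1" and d2: "2 \<le> degree E v"
  shows False
proof -
  have sg: "simple_graph V E" using sat by (simp add: saturated_def)
  have fE: "finite E" using sg_finE[OF sg] .
  have cN: "card (N E v) = degree E v" and fN: "finite (N E v)" using deg_card_nbrs[OF sg] by auto
  have "N E v \<noteq> {}" using cN d2 by auto
  then obtain a where a: "a \<in> N E v" by blast
  have "card (N E v - {a}) \<ge> 1" using cN d2 a fN by simp
  then have "N E v - {a} \<noteq> {}" by (intro notI) simp
  then obtain b where b: "b \<in> N E v" "b \<noteq> a" by blast
  have ea: "{v,a} \<in> E" and eb: "{v,b} \<in> E" using a b by (auto simp: N_def)
  have aV: "a \<in> V" "a \<noteq> v" and bV: "b \<in> V" "b \<noteq> v" using sg_edge[OF sg ea] sg_edge[OF sg eb] by auto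
  have da: "degree E a = 1" using Nleaf a by simp
  have ea': "{a,v} \<in> E" using ea by (simp add: insert_commute)
  have ne: "{a,b} \<notin> E"
  proof
    assume "{a,b} \<in> E"
    then have "b = v" using only_nbr1[OF sg da ea'] by simp
    then show False using bV by simp
  qed
  define H where "H = insert {a,b} E"
  obtain p where p: "degree_monotone_path V H p" "k \<le> length p"
    using sat_path[OF sat aV(1) bV(1) b(2)[symmetric] ne] unfolding H_def by auto
  have pth: "is_path V H p" and mono: "up (degree H) p \<or> down (degree H) p" using p(1) by (auto simp: dm_iff)
  have dp: "distinct p" using pth by (simp add: is_path_def)
  have dH: "\<And>w. degree H w = degree E w + (if w = a \<or> w = b then 1 else 0)"
    unfolding H_def using deg_insert[OF fE ne] by simp
  define C where "C = insert v (N E v)"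
  have closH: "\<forall>x y. x \<in> C \<longrightarrow> {x,y} \<in> H \<longrightarrow> y \<in> C"
  proof (intro allI impI)
    fix x y assume x: "x \<in> C" and xy: "{x,y} \<in> H"
    show "y \<in> C"
    proof (cases "{x,y} = {a,b}")
      case True
      then have "y \<in> {a,b}" by (metis insertI1 insert_commute)
      then show ?thesis using a b unfolding C_def by auto
    next
      case False
      then have e: "{x,y} \<in> E" using xy unfolding H_def by simp
      show ?thesis
      proof (cases "x = v")
        case True then show ?thesis using e unfolding C_def N_def by simp
      next
        case False
        then have xN: "x \<in> N E v" using x unfolding C_def by simp
        then have "{x,v} \<in> E" unfolding N_def by (simp add: insert_commute)
        then have "y = v" using only_nbr1[OF sg _ _ e] Nleaf xN by simp
        then show ?thesis unfolding C_def by simp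
      qed
    qed
  qed
  have touch: "a \<in> set p \<or> b \<in> set p"
  proof (rule ccontr)
    assume "\<not> (a \<in> set p \<or> b \<in> set p)"
    then have "degree_monotone_path V E p" using same[OF fE ne p(1)[unfolded H_def]] by simp
    then show False using mpG[OF sat] p(2) k4 by fastforce
  qed
  have aC: "a \<in> C" and bC: "b \<in> C" using a b unfolding C_def by auto
  have sub: "set p \<subseteq> C" using touch closure[OF pth closH _ aC] closure[OF pth closH _ bC] by blast
  obtain x where x: "x \<in> set p" "x \<noteq> v" "x \<noteq> a" "x \<noteq> b"
  proof (rule ccontr)
    assume "\<not> thesis"
    then have "set p \<subseteq> {v,a,b}" using that by blast
    then have "card (set p) \<le> card {v,a,b}" by (intro card_mono) auto
    also have "\<dots> \<le> 3" by (simp add: card_insert_if)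
    finally show False using distinct_card[OF dp] p(2) k4 by simp
  qed
  have xN: "x \<in> N E v" using x sub unfolding C_def by auto
  have dx: "degree E x = 1" using Nleaf xN by simp
  have exv: "{x,v} \<in> E" using xN unfolding N_def by (simp add: insert_commute)
  have "card {a,b,x} \<le> card (N E v)" using a b xN fN by (intro card_mono) auto
  then have d3: "3 \<le> degree E v" using cN b(2) x(3,4) by (simp add: card_insert_if)
  show False
  proof (rule local_max[OF pth mono _ x(1)])
    show "3 \<le> length p" using p(2) k4 by simp
    show "\<forall>w. {x,w} \<in> H \<longrightarrow> w = v"
    proof (intro allI impI)
      fix w assume "{x,w} \<in> H"
      moreover have "{x,w} \<noteq> {a,b}" using x by (auto simp: doubleton_eq_iff)
      ultimately have "{x,w} \<in> E" unfolding H_def by simp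
      then show "w = v" using only_nbr1[OF sg dx exv] by simp
    qed
    show "degree H x < degree H v" using dH[of x] dH[of v] dx d2 x aV bV by simp
    show "\<forall>w. {v,w} \<in> H \<longrightarrow> w \<noteq> x \<longrightarrow> degree H w < degree H v"
    proof (intro allI impI)
      fix w assume w: "{v,w} \<in> H" "w \<noteq> x"
      have "{v,w} \<noteq> {a,b}" using aV bV by (auto simp: doubleton_eq_iff)
      then have "{v,w} \<in> E" using w unfolding H_def by simp
      then have "w \<in> N E v" unfolding N_def by simp
      then have "degree E w = 1" using Nleaf by simp
      then show "degree H w < degree H v" using dH[of w] dH[of v] d3 aV bV by simp
    qed
  qed
qed

lemma Matching:
  assumes sat: "saturated k V E" and k4: "4 \<le> k" and cV: "3 \<le> card V"
    and all1: "\<forall>x\<in>V. degree E x = 1" and uV: "u \<in> V"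
  shows False
proof -
  have sg: "simple_graph V E" using sat by (simp add: saturated_def)
  have fE: "finite E" using sg_finE[OF sg] .
  have fV: "finite V" using sg by (simp add: simple_graph_def)
  have du: "degree E u = 1" using all1 uV by simp
  have "card (N E u) = 1" "finite (N E u)" using deg_card_nbrs[OF sg, of u] du by auto
  then obtain w where "N E u = {w}" by (meson card_1_singletonE)
  then have euw: "{u,w} \<in> E" by (auto simp: N_def)
  have "card (V - {u,w}) \<ge> 1"
  proof -
    have "card {u,w} \<le> 2" by (simp add: card_insert_if)
    moreover have "card (V - {u,w}) \<ge> card V - card {u,w}" by (rule diff_card_le_card_Diff) simp
    ultimately show ?thesis using cV by linarith
  qed
  then have "V - {u,w} \<noteq> {}" by (intro notI) simp
  then obtain t where t: "t \<in> V" "t \<noteq> u" "t \<noteq> w" by blast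
  have ne: "{u,t} \<notin> E"
  proof
    assume "{u,t} \<in> E"
    then have "t = w" using only_nbr1[OF sg du euw] by simp
    then show False using t by simp
  qed
  define H where "H = insert {u,t} E"
  obtain p where p: "degree_monotone_path V H p" "k \<le> length p"
    using sat_path[OF sat uV t(1) t(2)[symmetric] ne] unfolding H_def by auto
  have pth: "is_path V H p" and mono: "up (degree H) p \<or> down (degree H) p" using p(1) by (auto simp: dm_iff)
  have dp: "distinct p" and setp: "set p \<subseteq> V" using pth by (auto simp: is_path_def)
  have fH: "finite H" unfolding H_def using fE by simp
  have dH: "\<And>x. x \<in> V \<Longrightarrow> degree H x = 1 + (if x = u \<or> x = t then 1 else 0)"
    unfolding H_def using deg_insert[OF fE ne] all1 by simp
  have l4: "4 \<le> length p" using p(2) k4 by simp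
  have pV: "\<And>i. i < length p \<Longrightarrow> p!i \<in> V" using setp by (meson nth_mem subsetD)
  have int: "\<And>i. 0 < i \<Longrightarrow> Suc i < length p \<Longrightarrow> p!i = u \<or> p!i = t"
  proof -
    fix i assume i: "0 < i" "Suc i < length p"
    have "2 \<le> degree H (p!i)" using interior_deg[OF fH pth i] .
    then show "p!i = u \<or> p!i = t" using dH[OF pV[of i]] i by (auto split: if_splits)
  qed
  have p1: "p!1 = u \<or> p!1 = t" and p2: "p!2 = u \<or> p!2 = t" using int[of 1] int[of 2] l4 by auto
  have n12: "p!1 \<noteq> p!2" using nth_eq_iff_index_eq[OF dp, of 1 2] l4 by simp
  have l0: "0 < length p" using l4 by linarith
  then have pne: "p \<noteq> []" by auto
  have n0: "p!0 \<noteq> p!1" "p!0 \<noteq> p!2" using nth_eq_iff_index_eq[OF dp, of 0 1] nth_eq_iff_index_eq[OF dp, of 0 2] l4 l0 by auto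
  have n3: "p!3 \<noteq> p!1" "p!3 \<noteq> p!2" using nth_eq_iff_index_eq[OF dp, of 3 1] nth_eq_iff_index_eq[OF dp, of 3 2] l4 by auto
  have d0: "degree H (p!0) = 1" using pne dH[OF pV[of 0]] p1 p2 n12 n0 l4 by (auto split: if_splits)
  have d3: "degree H (p!3) = 1" using pne dH[OF pV[of 3]] p1 p2 n12 n3 l4 by (auto split: if_splits)
  have d1: "degree H (p!1) = 2" using pne dH[OF pV[of 1]] p1 l4 by auto
  have d2: "degree H (p!2) = 2" using pne dH[OF pV[of 2]] p2 l4 by auto
  show False
    using mono
  proof
    assume "up (degree H) p"
    moreover have "Suc 2 < length p" using l4 by simp
    ultimately have "degree H (p!2) \<le> degree H (p!Suc 2)" unfolding up_def by blast
    then show False using d2 d3 by (simp add: numeral_3_eq_3)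
  next
    assume "down (degree H) p"
    then have "degree H (p!Suc 0) \<le> degree H (p!0)" using l4 unfolding down_def by simp
    then show False using d0 d1 by simp
  qed
qed



theorem theorem2p4:
  fixes n k :: nat and V :: "'a set" and E :: "'a set set"
  assumes "n \<ge> 3" and "k \<ge> 4"
    and "card V = n" and "saturated k V E"
  shows "card E \<ge> n"
proof (rule ccontr)
  assume "\<not> n \<le> card E"
  then have cE: "card E < card V" using assms(3) by simp
  have sat: "saturated k V E" using assms(4) .
  have k4: "4 \<le> k" using assms(2) .
  have cV: "3 \<le> card V" using assms(1,3) by simp
  have sg: "simple_graph V E" using sat by (simp add: saturated_def)
  have fE: "finite E" using sg_finE[OF sg] .
  have fV: "finite V" using sg by (simp add: simple_graph_def)
  have mpG': "\<And>q. degree_monotone_path V E q \<Longrightarrow> length q \<le> k - 1" using mpG[OF sat] .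
  have Vne: "V \<noteq> {}" using cV by auto
  have "Max (degree E ` V) \<in> degree E ` V" using fV Vne by (intro Max_in) auto
  then obtain v where vV: "v \<in> V" and vmax: "degree E v = Max (degree E ` V)" by auto
  have mx: "\<forall>x\<in>V. degree E x \<le> degree E v" using fV vmax by (auto intro: Max_ge)
  have "card (V - {v}) \<ge> 1" using cV fV vV by simp
  then have "V - {v} \<noteq> {}" by (intro notI) simp
  then obtain b where bV: "b \<in> V" "b \<noteq> v" by blast
  show False
  proof (cases "degree E v = 0")
    case True
    have ne: "{v,b} \<notin> E" using deg_pos[OF sg, of v b] True by auto
    obtain p where p: "degree_monotone_path V (insert {v,b} E) p" "k \<le> length p"
      using sat_path[OF sat vV bV(1) bV(2)[symmetric] ne] by auto
    have pth: "is_path V (insert {v,b} E) p" using p(1) by (simp add: dm_iff)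
    have "2 \<le> degree (insert {v,b} E) (p!1)" using interior_deg[OF _ pth, of 1] fE p(2) k4 by simp
    moreover have "p!1 \<in> V"
    proof -
      have "1 < length p" using p(2) k4 by linarith
      then have "p!1 \<in> set p" by (rule nth_mem)
      then show ?thesis using pth unfolding is_path_def by blast
    qed
    ultimately show False using deg_insert[OF fE ne, of "p!1"] mx True by (auto split: if_splits)
  next
    case False
    note dv1 = False
    show False
    proof (cases "\<exists>u\<in>V. degree E u = 0")
      case True
      then obtain u where uV: "u \<in> V" and du: "degree E u = 0" by blast
      have uv: "u \<noteq> v" using du dv1 by auto
      have ne: "{u,v} \<notin> E" using deg_pos[OF sg, of u v] du by auto
      obtain p where p: "degree_monotone_path V (insert {u,v} E) p" "k \<le> length p"
        using sat_path[OF sat uV vV uv ne] by auto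
      obtain q where q: "is_path V E q" "q!0 = u" "k - 1 \<le> length q"
        using Lmain[OF sg mpG' k4 uV vV uv ne mx _ _ p] du dv1 by auto
      have "{q!0, q!Suc 0} \<in> E" using path_edge[OF q(1), of 0] q(3) k4 by simp
      then show False using deg_pos[OF sg] q(2) du by fastforce
    next
      case False
      then have noiso: "\<forall>x\<in>V. 1 \<le> degree E x" by (simp add: Suc_le_eq)
      show False
      proof (cases "degree E v = 1")
        case True
        have "\<forall>x\<in>V. degree E x = 1" using noiso mx True by (metis le_antisym)
        then show False using Matching[OF sat k4 cV _ vV] by simp
      next
        case False
        then have d2: "2 \<le> degree E v" using dv1 by simp
        show False
        proof (cases "\<exists>u\<in>V. degree E u = 1 \<and> {u,v} \<notin> E")
          case True
          then obtain u where uV: "u \<in> V" and du: "degree E u = 1" and ne: "{u,v} \<notin> E" by blast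
          have uv: "u \<noteq> v" using du d2 by auto
          obtain p where p: "degree_monotone_path V (insert {u,v} E) p" "k \<le> length p"
            using sat_path[OF sat uV vV uv ne] by auto
          obtain q where q: "is_path V E q" "q!0 = u" "k - 1 \<le> length q" "\<forall>i<length q. degree E (q!i) \<le> 2"
            using Lmain[OF sg mpG' k4 uV vV uv ne mx _ _ p] du d2 by auto
          obtain z where z: "is_path V E z" "length z = k - 1 \<or> length z = k" "degree E (z!0) = 1"
            "degree E (z!(length z - 1)) = 1" "\<forall>i. 0 < i \<longrightarrow> Suc i < length z \<longrightarrow> degree E (z!i) = 2"
            using Pendant[OF sg mpG' k4 noiso q(1) _ q(3) q(4)] q(2) du by auto
          show False using PathComp[OF sat k4 z] .
        next
          case False
          define L where "L = {x\<in>V. degree E x = 1}"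
          have cL: "degree E v \<le> card L" unfolding L_def using count_leaves[OF sg vV noiso cE d2] .
          have cN: "card (N E v) = degree E v" and fN: "finite (N E v)" using deg_card_nbrs[OF sg] by auto
          have LN: "L \<subseteq> N E v" using False unfolding L_def N_def by (auto simp: insert_commute)
          have "L = N E v" using card_seteq[OF fN LN] cL cN by simp
          then have "\<forall>x\<in>N E v. degree E x = 1" unfolding L_def by auto
          then show False using Star[OF sat k4 vV _ d2] by simp
        qed
      qed
    qed
  qed
qed

end
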